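(* Assume the setting below, with each $U_i$ bounded, connected, of positive mass $P(U_i)>0$ and $U_i\neq\mathcal X$, with unique global minimisers of all quality functions, and with all clusterings of each $U_i$ having connected clusters. Then for every $\gamma\ge0$, $$\mathrm{InStab}_{\mathrm{Mapper}}(\{Q^i_{n_i}\}_{i=1}^t,n,P)\le2\Big(P(T_\gamma(f))+P\big(D_\partial(f^n,f)>\gamma\big)+P(n_i=0)\Big),$$ where $P(D_\partial(f^n,f)>\gamma)$ is the probability (over $X\sim P^n$) that the optimal empirical Mapper function satisfies $D_\partial(f^n,f)>\gamma$, and $P(n_i=0)$ is the probability that $n_i=0$ for some $i\in\{1,\dots,t\}$.
   Context: $(\mathcal X,D)$ is a metric space with Borel probability measure $P$, covered by $U_1,\dots,U_t$. For each $i$ fix a finite label set $L_i=\{c^i_1,\dots,c^i_s\}$ (pairwise disjoint). A clustering of $U_i$ is a map $U_i\to L_i$ up to label permutation; $\mathcal F^i$ is the set of these. A Mapper function with components $f_1,\dots,f_t$ is $f(x)=\{f_i(x):x\in U_i\}$. Boundaries: for $A\subseteq U_i$, $\partial A=\{x\in\overline{U_i}:D(x,A)=D(x,\mathcal X\setminus A)=0\}$ with $D(x,A)=\inf_{y\in A}D(x,y)$; $\partial(f_i)=\bigcup_j\partial(f_i^{-1}(c^i_j))\cup\partial U_i$ ($\partial U_i$ the boundary in $\mathcal X$); tubes $T_\gamma(f_i)=\{x\in U_i:D(x,\partial(f_i))\le\gamma\}$ for $\gamma>0$, $T_0(f_i)=\partial(f_i)$, $T_\gamma(f)=\bigcup_iT_\gamma(f_i)$.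 Write $g_i\triangleleft T_\gamma(f_i)$ if for all $x,y\in U_i\setminus T_\gamma(f_i)$, $f_i(x)=f_i(y)\iff g_i(x)=g_i(y)$, and $g\triangleleft T_\gamma(f)$ if this holds for all $i$; $D_\partial(f,g)=\inf\{\gamma>0:f\triangleleft T_\gamma(g),\ g\triangleleft T_\gamma(f)\}$ (clusterings that agree up to permutation off the boundaries are identified). Quality functions: $P_i=P(\cdot\cap U_i)/P(U_i)$. $Q^i:\mathcal F^i\times M_1(U_i)\to\mathbb R$ ($M_1(U_i)$ = Borel probability measures on $U_i$) has a unique global minimiser $f_i$ of $Q^i(\cdot,P_i)$; the optimal Mapper function $f$ has components $f_i$. For $m\ge1$, $Q^i_m$ assigns a real number to each clustering of an $m$-point sample $Y\in U_i^m$ (order-independent) and has a unique minimiser $C^i_m(Y)$; $C^i_0$ is constant. For $X=(X_1,\dots,X_n)\sim P^n$, $X^i$ is the subsample of points lying in $U_i$, $n_i$ its size, and the optimal empirical Mapper function $f^n$ has components $f^n_i=C^i_{n_i}(X^i)$, extended to all of $U_i$ by Voronoi cells (a point gets the label of the nearest sample point, ties broken by smallest index). Instability: for Mapper functions $f,g$ and points $Y_1,\dots,Y_m$, $D_M(f,g)=\min_\pi\frac1m\sum_{j=1}^m\mathbf 1[f(Y_j)\neq\pi g(Y_j)]$, where $\pi=(\pi^1,\dots,\pi^t)$ with $\pi^i$ a permutation of $L_i$ acting label-wise. $\mathrm{InStab}_{\mathrm{Mapper}}(\{Q^i_{n_i}\}_{i=1}^t,n,P)$ is the expectation, over independent $X',X''\sim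 P^n$, of $D_M$ evaluated on the $2n$ points of $(X',X'')$ between the (Voronoi-extended) optimal empirical Mapper functions of $X'$ and of $X''$; this is assumed to be a random variable. *)

theory Defs
  imports "HOL-Probability.Probability" "HOL-Combinatorics.Permutations"
begin

definition Dist :: "'a::metric_space \<Rightarrow> 'a set \<Rightarrow> ereal" where
  "Dist x A = (if A = {} then \<infinity> else ereal (infdist x A))"

definition cluster_equiv :: "'l set \<Rightarrow> 'b set \<Rightarrow> ('b \<Rightarrow> 'l) \<Rightarrow> ('b \<Rightarrow> 'l) \<Rightarrow> bool" where
  "cluster_equiv L V g h \<longleftrightarrow> (\<exists>\<pi>. \<pi> permutes L \<and> (\<forall>x\<in>V. g x = \<pi> (h x)))"

definition clusterings :: "'a::topological_space set \<Rightarrow> 'l set \<Rightarrow> ('a \<Rightarrow> 'l) set" where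
  "clusterings V L = {g \<in> V \<rightarrow>\<^sub>E L. \<forall>c\<in>L. connected {x\<in>V. g x = c}}"

definition sample_clusterings :: "nat \<Rightarrow> 'l set \<Rightarrow> (nat \<Rightarrow> 'l) set" where
  "sample_clusterings m L = {..<m} \<rightarrow>\<^sub>E L"

definition cond_measure :: "'a measure \<Rightarrow> 'a set \<Rightarrow> 'a measure" where
  "cond_measure P V = scale_measure (ennreal (1 / measure P V)) (restrict_space P V)"

definition mapper :: "(nat \<Rightarrow> 'a set) \<Rightarrow> nat \<Rightarrow> (nat \<Rightarrow> 'a \<Rightarrow> 'l) \<Rightarrow> 'a \<Rightarrow> 'l set" where
  "mapper U t F x = {F i x | i. i < t \<and> x \<in> U i}"

definition bdry :: "'a::metric_space set \<Rightarrow> 'a set \<Rightarrow> 'a set" where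
  "bdry V A = {x \<in> closure V. Dist x A = 0 \<and> Dist x (UNIV - A) = 0}"

definition cluster_bdry :: "'a::metric_space set \<Rightarrow> 'l set \<Rightarrow> ('a \<Rightarrow> 'l) \<Rightarrow> 'a set" where
  "cluster_bdry V L g = (\<Union>c\<in>L. bdry V {x\<in>V. g x = c}) \<union> frontier V"

definition tube :: "'a::metric_space set \<Rightarrow> 'l set \<Rightarrow> ('a \<Rightarrow> 'l) \<Rightarrow> real \<Rightarrow> 'a set" where
  "tube V L g \<gamma> = (if \<gamma> = 0 then cluster_bdry V L g
                    else {x\<in>V. Dist x (cluster_bdry V L g) \<le> ereal \<gamma>})"

definition tube_map :: "(nat \<Rightarrow> 'a::metric_space set) \<Rightarrow> (nat \<Rightarrow> 'l set) \<Rightarrow> nat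
    \<Rightarrow> (nat \<Rightarrow> 'a \<Rightarrow> 'l) \<Rightarrow> real \<Rightarrow> 'a set" where
  "tube_map U L t F \<gamma> = (\<Union>i<t. tube (U i) (L i) (F i) \<gamma>)"

definition refines_off :: "(nat \<Rightarrow> 'a::metric_space set) \<Rightarrow> (nat \<Rightarrow> 'l set) \<Rightarrow> nat
    \<Rightarrow> (nat \<Rightarrow> 'a \<Rightarrow> 'l) \<Rightarrow> (nat \<Rightarrow> 'a \<Rightarrow> 'l) \<Rightarrow> real \<Rightarrow> bool" where
  "refines_off U L t G H \<gamma> \<longleftrightarrow>
     (\<forall>i<t. \<forall>x\<in>U i - tube (U i) (L i) (H i) \<gamma>. \<forall>y\<in>U i - tube (U i) (L i) (H i) \<gamma>.
        (H i x = H i y \<longleftrightarrow> G i x = G i y))"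

definition D_bdry :: "(nat \<Rightarrow> 'a::metric_space set) \<Rightarrow> (nat \<Rightarrow> 'l set) \<Rightarrow> nat
    \<Rightarrow> (nat \<Rightarrow> 'a \<Rightarrow> 'l) \<Rightarrow> (nat \<Rightarrow> 'a \<Rightarrow> 'l) \<Rightarrow> ereal" where
  "D_bdry U L t F G = Inf {ereal \<gamma> | \<gamma>. \<gamma> > 0 \<and> refines_off U L t F G \<gamma> \<and> refines_off U L t G F \<gamma>}"

text \<open>Label permutations pi = (pi^1,...,pi^t), as one permutation preserving each L i.\<close>
definition label_perms :: "(nat \<Rightarrow> 'l set) \<Rightarrow> nat \<Rightarrow> ('l \<Rightarrow> 'l) set" where
  "label_perms L t = {\<pi>. \<pi> permutes (\<Union>i<t. L i) \<and> (\<forall>i<t. \<pi> ` L i = L i)}"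

definition D_M :: "(nat \<Rightarrow> 'a set) \<Rightarrow> (nat \<Rightarrow> 'l set) \<Rightarrow> nat
    \<Rightarrow> (nat \<Rightarrow> 'a \<Rightarrow> 'l) \<Rightarrow> (nat \<Rightarrow> 'a \<Rightarrow> 'l) \<Rightarrow> 'a list \<Rightarrow> real" where
  "D_M U L t F G ys = Min ((\<lambda>\<pi>. real (card {j. j < length ys \<and>
        mapper U t F (ys ! j) \<noteq> \<pi> ` mapper U t G (ys ! j)}) / real (length ys)) ` label_perms L t)"

definition sub_sample :: "(nat \<Rightarrow> 'a set) \<Rightarrow> nat \<Rightarrow> nat \<Rightarrow> (nat \<Rightarrow> 'a) \<Rightarrow> 'a list" where
  "sub_sample U i n X = filter (\<lambda>x. x \<in> U i) (map X [0..<n])"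

definition voronoi :: "'a::metric_space list \<Rightarrow> (nat \<Rightarrow> 'l) \<Rightarrow> 'a \<Rightarrow> 'l" where
  "voronoi ys c x = c (LEAST j. j < length ys \<and> (\<forall>k<length ys. dist x (ys ! j) \<le> dist x (ys ! k)))"

text \<open>Optimal empirical Mapper function f^n; C i ys is the optimal clustering of the
  sample ys (m \<ge> 1), and c0 i the constant label of C^i_0.\<close>
definition emp_mapper :: "(nat \<Rightarrow> 'a::metric_space set) \<Rightarrow> (nat \<Rightarrow> 'a list \<Rightarrow> nat \<Rightarrow> 'l)
    \<Rightarrow> (nat \<Rightarrow> 'l) \<Rightarrow> nat \<Rightarrow> (nat \<Rightarrow> 'a) \<Rightarrow> nat \<Rightarrow> 'a \<Rightarrow> 'l" where
  "emp_mapper U C c0 n X i = (let ys = sub_sample U i n X in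
      if ys = [] then (\<lambda>_. c0 i) else voronoi ys (C i ys))"

definition InStab :: "(nat \<Rightarrow> 'a::metric_space set) \<Rightarrow> (nat \<Rightarrow> 'l set) \<Rightarrow> nat
    \<Rightarrow> (nat \<Rightarrow> 'a list \<Rightarrow> nat \<Rightarrow> 'l) \<Rightarrow> (nat \<Rightarrow> 'l) \<Rightarrow> nat \<Rightarrow> 'a measure \<Rightarrow> real" where
  "InStab U L t C c0 n P =
     (\<integral>Z. (case Z of (X', X'') \<Rightarrow>
        D_M U L t (emp_mapper U C c0 n X') (emp_mapper U C c0 n X'')
            (map X' [0..<n] @ map X'' [0..<n]))
      \<partial>(PiM {..<n} (\<lambda>_. P) \<Otimes>\<^sub>M PiM {..<n} (\<lambda>_. P)))"

end

theory Submission
  imports Defs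
begin

lemma ext_perm:
  assumes "finite S" "inj_on p A" "A \<subseteq> S" "p ` A \<subseteq> S"
  shows "\<exists>\<pi>. \<pi> permutes S \<and> (\<forall>x\<in>A. \<pi> x = p x)"
proof -
  have fA: "finite A" using assms finite_subset by blast
  have "card (S - A) = card (S - p ` A)"
    using assms fA by (simp add: card_Diff_subset card_image card_mono)
  then obtain g where g: "bij_betw g (S - A) (S - p ` A)"
    using finite_same_card_bij assms by (meson finite_Diff)
  define \<pi> where "\<pi> x = (if x \<in> A then p x else if x \<in> S then g x else x)" for x
  have b1: "bij_betw \<pi> A (p ` A)"
    by (rule bij_betw_cong[THEN iffD2, of _ _ p]) (auto simp: \<pi>_def assms bij_betw_imageI)
  have b2: "bij_betw \<pi> (S - A) (S - p ` A)"
    by (rule bij_betw_cong[THEN iffD2, OF _ g]) (auto simp: \<pi>_def)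
  have "bij_betw \<pi> (A \<union> (S - A)) (p ` A \<union> (S - p ` A))"
    by (rule bij_betw_combine[OF b1 b2]) auto
  moreover have "A \<union> (S - A) = S" "p ` A \<union> (S - p ` A) = S" using assms by auto
  ultimately have "bij_betw \<pi> S S" by simp
  then have "\<pi> permutes S" by (rule bij_imp_permutes) (auto simp: \<pi>_def assms(3)[THEN subsetD])
  then show ?thesis by (auto simp: \<pi>_def)
qed

lemma glue_perm:
  assumes fin: "\<forall>i<t. finite (L i)" and disj: "\<forall>i<t. \<forall>j<t. i \<noteq> j \<longrightarrow> L i \<inter> L j = {}"
   and inj: "inj_on p A" and AL: "A \<subseteq> (\<Union>i<t. L i)" and pres: "\<forall>i<t. \<forall>a\<in>A. a \<in> L i \<longrightarrow> p a \<in> L i"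
  shows "\<exists>\<pi>\<in>label_perms L t. \<forall>a\<in>A. \<pi> a = p a"
proof -
  have "\<forall>i. \<exists>\<pi>. i < t \<longrightarrow> \<pi> permutes L i \<and> (\<forall>a\<in>A \<inter> L i. \<pi> a = p a)"
  proof (intro allI impI)
    fix i
    show "\<exists>\<pi>. i < t \<longrightarrow> \<pi> permutes L i \<and> (\<forall>a\<in>A \<inter> L i. \<pi> a = p a)"
    proof (cases "i < t")
      case True
      have "\<exists>\<pi>. \<pi> permutes L i \<and> (\<forall>a\<in>A \<inter> L i. \<pi> a = p a)"
        using True fin pres inj_on_subset[OF inj, of "A \<inter> L i"] by (intro ext_perm) auto
      then show ?thesis by blast
    qed auto
  qed
  then have "\<exists>ps. \<forall>i. i < t \<longrightarrow> ps i permutes L i \<and> (\<forall>a\<in>A \<inter> L i. ps i a = p a)"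
    by (rule choice)
  then obtain ps where ps0: "\<forall>i. i < t \<longrightarrow> ps i permutes L i \<and> (\<forall>a\<in>A \<inter> L i. ps i a = p a)"
    by blast
  have ps: "ps i permutes L i \<and> (\<forall>a\<in>A \<inter> L i. ps i a = p a)" if "i < t" for i
    using ps0 that by blast
  define S where "S = (\<Union>i<t. L i)"
  define idx where "idx x = (SOME i. i < t \<and> x \<in> L i)" for x
  have idx: "idx x = i" if "i < t" "x \<in> L i" for x i
  proof -
    have "idx x < t \<and> x \<in> L (idx x)" unfolding idx_def by (rule someI[of _ i]) (use that in auto)
    then have "L (idx x) \<inter> L i \<noteq> {}" using that by blast
    then show ?thesis using disj that \<open>idx x < t \<and> x \<in> L (idx x)\<close> by meson
  qed
  define \<pi> where "\<pi> x = (if x \<in> S then ps (idx x) x else x)" for x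
  have \<pi>i: "\<pi> x = ps i x" if "i < t" "x \<in> L i" for x i
  proof -
    have "x \<in> S" using that by (auto simp: S_def)
    then show ?thesis using idx[OF that] by (simp add: \<pi>_def)
  qed
  have psL: "ps i x \<in> L i" if "i < t" "x \<in> L i" for x i
    using permutes_in_image[of "ps i" "L i" x] ps[OF that(1)] that(2) by simp
  have img: "\<pi> ` L i = L i" if "i < t" for i
  proof -
    have "\<pi> ` L i = ps i ` L i" using \<pi>i[OF that] by (intro image_cong) auto
    also have "\<dots> = L i" using ps[OF that] permutes_image[of "ps i" "L i"] by simp
    finally show ?thesis .
  qed
  have "inj_on \<pi> S"
  proof (rule inj_onI)
    fix x y assume "x \<in> S" "y \<in> S" "\<pi> x = \<pi> y"
    then obtain i j where ij: "i < t" "x \<in> L i" "j < t" "y \<in> L j" by (auto simp: S_def)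
    then have "\<pi> x \<in> L i" "\<pi> y \<in> L j" using \<pi>i[of i x] \<pi>i[of j y] psL[of i x] psL[of j y] by auto
    then have "L i \<inter> L j \<noteq> {}" using \<open>\<pi> x = \<pi> y\<close> by auto
    then have "i = j" using disj ij by meson
    then have "ps i x = ps i y" using ij \<open>\<pi> x = \<pi> y\<close> \<pi>i[of i x] \<pi>i[of i y] by simp
    then show "x = y" using ps[OF ij(1)] permutes_inj injD by metis
  qed
  moreover have "\<pi> ` S = S" unfolding S_def image_UN using img by simp
  ultimately have "bij_betw \<pi> S S" by (simp add: bij_betw_def)
  then have "\<pi> permutes S" by (rule bij_imp_permutes) (auto simp: \<pi>_def)
  then have "\<pi> \<in> label_perms L t" using img by (auto simp: label_perms_def S_def)
  moreover have "\<forall>a\<in>A. \<pi> a = p a"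
  proof
    fix a assume "a \<in> A"
    then obtain i where "i < t" "a \<in> L i" using AL by auto
    then show "\<pi> a = p a" using \<pi>i[of i a] ps[of i] \<open>a \<in> A\<close> by auto
  qed
  ultimately show ?thesis by blast
qed

lemma Dist_zero_iff: "Dist x A = 0 \<longleftrightarrow> x \<in> closure A"
  by (cases "A = {}") (auto simp: Dist_def in_closure_iff_infdist_zero)

lemma bdry_eq: "bdry V A = closure V \<inter> closure A \<inter> closure (UNIV - A)"
  by (auto simp: bdry_def Dist_zero_iff)

lemma closed_cluster_bdry:
  assumes "finite L" shows "closed (cluster_bdry V L g)"
  unfolding cluster_bdry_def bdry_eq using assms
  by (intro closed_Un closed_UN closed_Int) auto

lemma Dist_pos: assumes "closed B" "x \<notin> B" shows "Dist x B > 0"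
  using infdist_pos_not_in_closed[OF assms(1) _ assms(2)] by (auto simp: Dist_def)

lemma off_tube_Dist:
  assumes "finite L" "\<gamma> \<ge> 0" "x \<in> V - tube V L g \<gamma>"
  shows "Dist x (cluster_bdry V L g) > ereal \<gamma>"
proof (cases "\<gamma> = 0")
  case True
  then have "x \<notin> cluster_bdry V L g" using assms by (simp add: tube_def)
  then show ?thesis using Dist_pos[OF closed_cluster_bdry[OF assms(1)]] True by (simp add: zero_ereal_def)
next
  case False
  then show ?thesis using assms by (auto simp: tube_def)
qed

lemma good_pair:
  assumes D: "D_bdry U L t E f \<le> ereal \<gamma>" and g: "\<gamma> \<ge> 0" and i: "i < t" and fin: "finite (L i)"
    and x: "x \<in> U i - tube (U i) (L i) (f i) \<gamma>" and y: "y \<in> U i - tube (U i) (L i) (f i) \<gamma>"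
  shows "f i x = f i y \<longleftrightarrow> E i x = E i y"
proof -
  let ?B = "cluster_bdry (U i) (L i) (f i)"
  obtain rx where rx: "ereal \<gamma> < ereal rx" "ereal rx < Dist x ?B"
    using ereal_dense2[OF off_tube_Dist[OF fin g x]] by blast
  obtain ry where ry: "ereal \<gamma> < ereal ry" "ereal ry < Dist y ?B"
    using ereal_dense2[OF off_tube_Dist[OF fin g y]] by blast
  define r where "r = min rx ry"
  have "\<gamma> < r" using rx ry by (simp add: r_def)
  then have "D_bdry U L t E f < ereal r" using le_less_trans[OF D, of "ereal r"] by simp
  then obtain e where e: "e \<in> {ereal \<gamma> | \<gamma>. \<gamma> > 0 \<and> refines_off U L t E f \<gamma> \<and> refines_off U L t f E \<gamma>}"
      "e < ereal r"
    unfolding D_bdry_def Inf_less_iff by blast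
  then obtain \<delta> where \<delta>: "e = ereal \<delta>" "\<delta> > 0" "refines_off U L t E f \<delta>" by blast
  have "\<delta> < r" using e \<delta> by simp
  have "\<delta> < rx" "\<delta> < ry" using \<open>\<delta> < r\<close> by (auto simp: r_def)
  then have "ereal \<delta> < Dist x ?B" "ereal \<delta> < Dist y ?B"
    using less_trans[of "ereal \<delta>" "ereal rx"] less_trans[of "ereal \<delta>" "ereal ry"] rx(2) ry(2) by auto
  then have xd: "x \<in> U i - tube (U i) (L i) (f i) \<delta>" and yd: "y \<in> U i - tube (U i) (L i) (f i) \<delta>"
    using x y \<delta>(2) by (simp_all add: tube_def not_le)
  have "\<forall>x\<in>U i - tube (U i) (L i) (f i) \<delta>. \<forall>y\<in>U i - tube (U i) (L i) (f i) \<delta>.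
        (f i x = f i y \<longleftrightarrow> E i x = E i y)" using \<delta>(3) i unfolding refines_off_def by simp
  then show ?thesis using xd yd by simp
qed

lemma voronoi_in:
  assumes "ys \<noteq> []" "c \<in> {..<length ys} \<rightarrow>\<^sub>E Lb"
  shows "voronoi ys c x \<in> Lb"
proof -
  let ?P = "\<lambda>j. j < length ys \<and> (\<forall>k<length ys. dist x (ys ! j) \<le> dist x (ys ! k))"
  define m where "m = Min ((\<lambda>k. dist x (ys ! k)) ` {..<length ys})"
  have "m \<in> (\<lambda>k. dist x (ys ! k)) ` {..<length ys}" unfolding m_def
    using assms(1) by (intro Min_in) auto
  then obtain j where j: "j < length ys" "m = dist x (ys ! j)" by auto
  have "\<forall>k<length ys. m \<le> dist x (ys ! k)" unfolding m_def by (intro allI impI Min_le) auto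
  then have "?P j" using j by auto
  then have "?P (LEAST j. ?P j)" by (rule LeastI)
  then show ?thesis using assms(2) unfolding voronoi_def by auto
qed

lemma emp_in_L:
  assumes "c0 i \<in> L i" "\<forall>Y. Y \<noteq> [] \<longrightarrow> set Y \<subseteq> U i \<longrightarrow> C i Y \<in> sample_clusterings (length Y) (L i)"
  shows "emp_mapper U C c0 n X i x \<in> L i"
proof (cases "sub_sample U i n X = []")
  case True then show ?thesis using assms by (simp add: emp_mapper_def)
next
  case False
  have "set (sub_sample U i n X) \<subseteq> U i" by (auto simp: sub_sample_def)
  then have "C i (sub_sample U i n X) \<in> {..<length (sub_sample U i n X)} \<rightarrow>\<^sub>E L i"
    using assms False by (simp add: sample_clusterings_def)
  then show ?thesis using False voronoi_in by (simp add: emp_mapper_def Let_def)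
qed

lemma pointwise_perm:
  assumes fin: "\<forall>i<t. finite (L i)" and disj: "\<forall>i<t. \<forall>j<t. i \<noteq> j \<longrightarrow> L i \<inter> L j = {}"
    and L1: "\<And>i x. i < t \<Longrightarrow> x \<in> U i \<Longrightarrow> E1 i x \<in> L i"
    and L2: "\<And>i x. i < t \<Longrightarrow> x \<in> U i \<Longrightarrow> E2 i x \<in> L i"
    and r1: "\<And>i x y. i < t \<Longrightarrow> x \<in> U i - tube (U i) (L i) (f i) \<gamma> \<Longrightarrow> y \<in> U i - tube (U i) (L i) (f i) \<gamma>
              \<Longrightarrow> f i x = f i y \<longleftrightarrow> E1 i x = E1 i y"
    and r2: "\<And>i x y. i < t \<Longrightarrow> x \<in> U i - tube (U i) (L i) (f i) \<gamma> \<Longrightarrow> y \<in> U i - tube (U i) (L i) (f i) \<gamma>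
              \<Longrightarrow> f i x = f i y \<longleftrightarrow> E2 i x = E2 i y"
  shows "\<exists>\<pi>\<in>label_perms L t. \<forall>z. z \<notin> tube_map U L t f \<gamma> \<longrightarrow> mapper U t E1 z = \<pi> ` mapper U t E2 z"
proof -
  define W where "W i = U i - tube (U i) (L i) (f i) \<gamma>" for i
  define A where "A = {E2 i x | i x. i < t \<and> x \<in> W i}"
  define p where "p a = (SOME b. \<exists>i x. i < t \<and> x \<in> W i \<and> a = E2 i x \<and> b = E1 i x)" for a
  have same: "i = k" if "i < t" "k < t" "a \<in> L i" "a \<in> L k" for i k a
    using disj that by blast
  have pE: "p (E2 i x) = E1 i x" if ix: "i < t" "x \<in> W i" for i x
  proof -
    have "\<exists>b. \<exists>i' x'. i' < t \<and> x' \<in> W i' \<and> E2 i x = E2 i' x' \<and> b = E1 i' x'" using ix by blast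
    then have "\<exists>i' x'. i' < t \<and> x' \<in> W i' \<and> E2 i x = E2 i' x' \<and> p (E2 i x) = E1 i' x'"
      unfolding p_def by (rule someI_ex)
    then obtain i' x' where i': "i' < t" "x' \<in> W i'" "E2 i x = E2 i' x'" "p (E2 i x) = E1 i' x'" by blast
    have "E2 i x \<in> L i" using L2[of i x] ix by (simp add: W_def)
    have "E2 i' x' \<in> L i'" using L2[of i' x'] i' by (simp add: W_def)
    then have "i = i'" using same[of i i' "E2 i x"] ix i' \<open>E2 i x \<in> L i\<close> by simp
    then have "E2 i x = E2 i x'" using i' by simp
    then have "E1 i x = E1 i x'" using r1[of i x x'] r2[of i x x'] ix i' \<open>i = i'\<close> by (simp add: W_def)
    then show ?thesis using i' \<open>i = i'\<close> by simp
  qed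
  have "inj_on p A"
  proof (rule inj_onI)
    fix a b assume "a \<in> A" "b \<in> A" "p a = p b"
    then obtain i x k y where ab: "i < t" "x \<in> W i" "a = E2 i x" "k < t" "y \<in> W k" "b = E2 k y"
      by (auto simp: A_def)
    then have "E1 i x = E1 k y" using pE \<open>p a = p b\<close> by simp
    moreover have "E1 i x \<in> L i" "E1 k y \<in> L k" using L1 ab by (auto simp: W_def)
    ultimately have "i = k" using same[of i k] ab by simp
    then have "E2 i x = E2 i y" using r1[of i x y] r2[of i x y] ab \<open>E1 i x = E1 k y\<close> by (simp add: W_def)
    then show "a = b" using ab \<open>i = k\<close> by simp
  qed
  moreover have "A \<subseteq> (\<Union>i<t. L i)" using L2 by (auto simp: A_def W_def)
  moreover have "\<forall>i<t. \<forall>a\<in>A. a \<in> L i \<longrightarrow> p a \<in> L i"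
  proof (intro allI impI ballI)
    fix i a assume "i < t" "a \<in> A" "a \<in> L i"
    then obtain k x where kx: "k < t" "x \<in> W k" "a = E2 k x" by (auto simp: A_def)
    then have "a \<in> L k" using L2 by (auto simp: W_def)
    then have "k = i" using same \<open>i < t\<close> kx \<open>a \<in> L i\<close> by blast
    then show "p a \<in> L i" using pE kx L1 by (auto simp: W_def)
  qed
  ultimately obtain \<pi> where \<pi>: "\<pi> \<in> label_perms L t" "\<forall>a\<in>A. \<pi> a = p a"
    using glue_perm[OF fin disj] by blast
  have "mapper U t E1 z = \<pi> ` mapper U t E2 z" if z: "z \<notin> tube_map U L t f \<gamma>" for z
  proof -
    have "\<pi> (E2 i z) = E1 i z" if "i < t" "z \<in> U i" for i
    proof -
      have "z \<in> W i" using z that by (auto simp: W_def tube_map_def)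
      then have "E2 i z \<in> A" using that by (auto simp: A_def)
      then show ?thesis using \<pi>(2) pE[of i z] that \<open>z \<in> W i\<close> by simp
    qed
    then have "{E1 i z | i. i < t \<and> z \<in> U i} = {\<pi> (E2 i z) | i. i < t \<and> z \<in> U i}" by (metis (no_types, lifting))
    also have "\<dots> = \<pi> ` {E2 i z | i. i < t \<and> z \<in> U i}" by blast
    finally show ?thesis unfolding mapper_def .
  qed
  then show ?thesis using \<pi>(1) by blast
qed

lemma finite_label_perms:
  assumes "\<forall>i<t. finite (L i)" shows "finite (label_perms L t)"
proof -
  have "finite {p. p permutes (\<Union>i<t. L i)}" using assms by (intro finite_permutations) auto
  then show ?thesis by (rule finite_subset[rotated]) (auto simp: label_perms_def)
qed

lemma id_label_perms: "id \<in> label_perms L t"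
  by (simp add: label_perms_def permutes_id)

lemma D_M_le:
  assumes "\<forall>i<t. finite (L i)" "\<pi> \<in> label_perms L t"
  shows "D_M U L t F G ys \<le> real (card {j. j < length ys \<and>
        mapper U t F (ys ! j) \<noteq> \<pi> ` mapper U t G (ys ! j)}) / real (length ys)"
  unfolding D_M_def using assms finite_label_perms[OF assms(1)] by (intro Min_le) auto

lemma D_M_nonneg:
  assumes "\<forall>i<t. finite (L i)"
  shows "0 \<le> D_M U L t F G ys"
  unfolding D_M_def using finite_label_perms[OF assms] id_label_perms
  by (subst Min_ge_iff) auto

lemma D_M_le1:
  assumes "\<forall>i<t. finite (L i)"
  shows "D_M U L t F G ys \<le> 1"
proof -
  have "D_M U L t F G ys \<le> real (card {j. j < length ys \<and>
        mapper U t F (ys ! j) \<noteq> id ` mapper U t G (ys ! j)}) / real (length ys)"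
    by (rule D_M_le[OF assms id_label_perms])
  also have "\<dots> \<le> 1"
  proof -
    have "card {j. j < length ys \<and> mapper U t F (ys ! j) \<noteq> id ` mapper U t G (ys ! j)} \<le> card {..<length ys}"
      by (intro card_mono) auto
    then show ?thesis by (cases "length ys = 0") (auto simp: divide_le_eq_1)
  qed
  finally show ?thesis .
qed

lemma D_M_tube:
  assumes "\<forall>i<t. finite (L i)" "\<pi> \<in> label_perms L t"
    and "\<forall>z. z \<notin> T \<longrightarrow> mapper U t F z = \<pi> ` mapper U t G z"
  shows "D_M U L t F G ys \<le> real (card {j. j < length ys \<and> ys ! j \<in> T}) / real (length ys)"
proof -
  have "card {j. j < length ys \<and> mapper U t F (ys ! j) \<noteq> \<pi> ` mapper U t G (ys ! j)}
      \<le> card {j. j < length ys \<and> ys ! j \<in> T}"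
    using assms(3) by (intro card_mono) auto
  then have "real (card {j. j < length ys \<and> mapper U t F (ys ! j) \<noteq> \<pi> ` mapper U t G (ys ! j)}) / real (length ys)
      \<le> real (card {j. j < length ys \<and> ys ! j \<in> T}) / real (length ys)"
    by (intro divide_right_mono) auto
  then show ?thesis using D_M_le[OF assms(1,2), of U F G ys] by linarith
qed

lemma tube_borel:
  assumes "U \<in> sets borel" "finite L"
  shows "tube U L g \<gamma> \<in> sets borel"
proof (cases "\<gamma> = 0")
  case True
  then show ?thesis using borel_closed[OF closed_cluster_bdry[OF assms(2)]] by (simp add: tube_def)
next
  case False
  let ?B = "cluster_bdry U L g"
  show ?thesis
  proof (cases "?B = {}")
    case True
    then show ?thesis using False by (simp add: tube_def Dist_def)
  next
    case ne: False
    have "tube U L g \<gamma> = U \<inter> {x. infdist x ?B \<le> \<gamma>}"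
      using False ne by (auto simp: tube_def Dist_def)
    moreover have "closed {x. infdist x ?B \<le> \<gamma>}"
      by (intro closed_Collect_le continuous_intros)
    ultimately show ?thesis using assms(1) by auto
  qed
qed

lemma lenfilt: "real (length (filter (\<lambda>x. x \<in> T) (map X [0..<n]))) = (\<Sum>j<n. indicator T (X j))"
  by (induction n) (auto simp: indicator_def)

theorem theorem7p1:
  fixes P :: "'a::metric_space measure" and U :: "nat \<Rightarrow> 'a set" and t s n :: nat
    and L :: "nat \<Rightarrow> 'l set"
    and Q :: "nat \<Rightarrow> ('a \<Rightarrow> 'l) \<Rightarrow> 'a measure \<Rightarrow> real" and f :: "nat \<Rightarrow> 'a \<Rightarrow> 'l"
    and Qm :: "nat \<Rightarrow> 'a list \<Rightarrow> (nat \<Rightarrow> 'l) \<Rightarrow> real"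
    and C :: "nat \<Rightarrow> 'a list \<Rightarrow> nat \<Rightarrow> 'l" and c0 :: "nat \<Rightarrow> 'l"
    and \<gamma> :: real
  assumes "prob_space P" and "sets P = sets borel"
    and "(\<Union>i<t. U i) = UNIV"
    and "\<forall>i<t. U i \<in> sets P \<and> bounded (U i) \<and> connected (U i) \<and> measure P (U i) > 0 \<and> U i \<noteq> UNIV"
    and "\<forall>i<t. finite (L i) \<and> card (L i) = s"
    and "\<forall>i<t. \<forall>j<t. i \<noteq> j \<longrightarrow> L i \<inter> L j = {}"
    and "\<forall>i<t. \<forall>\<mu>. \<forall>g\<in>clusterings (U i) (L i). \<forall>h\<in>clusterings (U i) (L i).
           cluster_equiv (L i) (U i) g h \<longrightarrow> Q i g \<mu> = Q i h \<mu>"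
    and "\<forall>i<t. f i \<in> clusterings (U i) (L i) \<and>
           (\<forall>g\<in>clusterings (U i) (L i).
              Q i (f i) (cond_measure P (U i)) \<le> Q i g (cond_measure P (U i)) \<and>
              (Q i g (cond_measure P (U i)) = Q i (f i) (cond_measure P (U i))
                 \<longrightarrow> cluster_equiv (L i) (U i) g (f i)))"
    and "\<forall>i<t. \<forall>Y. \<forall>c\<in>sample_clusterings (length Y) (L i). \<forall>c'\<in>sample_clusterings (length Y) (L i).
           cluster_equiv (L i) {..<length Y} c c' \<longrightarrow> Qm i Y c = Qm i Y c'"
    and "\<forall>i<t. \<forall>Y \<sigma>. \<forall>c\<in>sample_clusterings (length Y) (L i). \<sigma> permutes {..<length Y} \<longrightarrow>
           Qm i (map (\<lambda>k. Y ! \<sigma> k) [0..<length Y]) (restrict (c \<circ> \<sigma>) {..<length Y}) = Qm i Y c"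
    and "\<forall>i<t. \<forall>Y. Y \<noteq> [] \<longrightarrow> set Y \<subseteq> U i \<longrightarrow>
           C i Y \<in> sample_clusterings (length Y) (L i) \<and>
           (\<forall>c\<in>sample_clusterings (length Y) (L i).
              Qm i Y (C i Y) \<le> Qm i Y c \<and>
              (Qm i Y c = Qm i Y (C i Y) \<longrightarrow> cluster_equiv (L i) {..<length Y} c (C i Y)))"
    and "\<forall>i<t. c0 i \<in> L i"
    and "(\<lambda>(X', X''). D_M U L t (emp_mapper U C c0 n X') (emp_mapper U C c0 n X'')
            (map X' [0..<n] @ map X'' [0..<n]))
         \<in> borel_measurable (PiM {..<n} (\<lambda>_. P) \<Otimes>\<^sub>M PiM {..<n} (\<lambda>_. P))"
    and "{X \<in> space (PiM {..<n} (\<lambda>_. P)). D_bdry U L t (emp_mapper U C c0 n X) f > ereal \<gamma>}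
         \<in> sets (PiM {..<n} (\<lambda>_. P))"
    and "\<gamma> \<ge> 0"
  shows "InStab U L t C c0 n P \<le>
     2 * (measure P (tube_map U L t f \<gamma>)
          + measure (PiM {..<n} (\<lambda>_. P))
              {X \<in> space (PiM {..<n} (\<lambda>_. P)). D_bdry U L t (emp_mapper U C c0 n X) f > ereal \<gamma>}
          + measure (PiM {..<n} (\<lambda>_. P))
              {X \<in> space (PiM {..<n} (\<lambda>_. P)). \<exists>i<t. length (sub_sample U i n X) = 0})"
proof -
  interpret P: prob_space P by (rule assms(1))
  define M where "M = PiM {..<n} (\<lambda>_. P)"
  define N where "N = M \<Otimes>\<^sub>M M"
  have pM: "prob_space M" unfolding M_def by (rule prob_space_PiM) (rule assms(1))
  interpret M: prob_space M by (rule pM)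
  interpret MM: pair_prob_space M M by unfold_locales
  have pN: "prob_space N" unfolding N_def by (rule prob_space_pair[OF pM pM])
  interpret N: prob_space N by (rule pN)
  have fin: "\<forall>i<t. finite (L i)" using assms(5) by blast
  define T where "T = tube_map U L t f \<gamma>"
  define B where "B = {X \<in> space M. D_bdry U L t (emp_mapper U C c0 n X) f > ereal \<gamma>}"
  define E where "E X = emp_mapper U C c0 n X" for X
  define DD where "DD = (\<lambda>(X', X''). D_M U L t (E X') (E X'') (map X' [0..<n] @ map X'' [0..<n]))"
  have sT: "T \<in> sets P"
  proof -
    have "tube (U i) (L i) (f i) \<gamma> \<in> sets P" if "i < t" for i
      using tube_borel[of "U i" "L i" "f i" \<gamma>] assms(2,4,5) that by auto
    then show ?thesis unfolding T_def tube_map_def by (intro sets.finite_UN) auto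
  qed
  have sB: "B \<in> sets M" using assms(14) by (simp add: B_def M_def)
  define h where "h Z = (\<Sum>j<n. indicator T (fst Z j) + indicator T (snd Z j)) / real (2*n)
      + indicator B (fst Z) + indicator B (snd Z)" for Z :: "(nat \<Rightarrow> 'a) \<times> (nat \<Rightarrow> 'a)"
  have mcomp: "(\<lambda>X. X j) \<in> measurable M P" if "j < n" for j
    unfolding M_def using measurable_component_singleton[of j "{..<n}" "\<lambda>_. P"] that by simp
  have mTi: "(indicator T :: 'a \<Rightarrow> real) \<in> borel_measurable P"
    using borel_measurable_indicator[OF sT] .
  have mT: "(\<lambda>X. indicator T (X j) :: real) \<in> borel_measurable M" if "j < n" for j
    using measurable_compose[OF mcomp[OF that] borel_measurable_indicator[OF sT]] .
  have mB: "(indicator B :: _ \<Rightarrow> real) \<in> borel_measurable M"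
    using borel_measurable_indicator[OF sB] .
  have fstI: "(\<integral>Z. g (fst Z) \<partial>N) = (\<integral>X. g X \<partial>M)" if "g \<in> borel_measurable M" for g :: "_ \<Rightarrow> real"
  proof -
    have "(\<integral>Z. g (fst Z) \<partial>N) = integral\<^sup>L (distr N M fst) g"
      unfolding N_def by (rule integral_distr[symmetric]) (auto intro: that)
    also have "distr N M fst = M" unfolding N_def by (rule M.distr_pair_fst)
    finally show ?thesis .
  qed
  have sndI: "(\<integral>Z. g (snd Z) \<partial>N) = (\<integral>Z. g (fst Z) \<partial>N)" if "g \<in> borel_measurable M" for g :: "_ \<Rightarrow> real"
  proof -
    have "(\<integral>Z. g (snd Z) \<partial>N) = (\<integral>Z. g (snd Z) \<partial>(distr N N (\<lambda>(x, y). (y, x))))"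
      unfolding N_def using MM.distr_pair_swap by simp
    also have "\<dots> = (\<integral>Z. g (snd ((\<lambda>(x, y). (y, x)) Z)) \<partial>N)"
      unfolding N_def by (rule integral_distr) (auto intro: measurable_pair_swap' measurable_compose[OF measurable_snd that])
    also have "\<dots> = (\<integral>Z. g (fst Z) \<partial>N)" by (simp add: case_prod_beta)
    finally show ?thesis .
  qed
  have compI: "(\<integral>X. indicator T (X j) \<partial>M) = measure P T" if "j < n" for j
  proof -
    have "(\<integral>X. indicator T (X j) \<partial>M) = integral\<^sup>L (distr M P (\<lambda>X. X j)) (indicator T :: _ \<Rightarrow> real)"
      using integral_distr[OF mcomp[OF that] mTi] by simp
    also have "distr M P (\<lambda>X. X j) = P"
      unfolding M_def using distr_PiM_component[of "{..<n}" "\<lambda>_. P" j] assms(1) that by simp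
    finally show ?thesis using sets.sets_into_space[OF sT] by (simp add: Int_absorb2)
  qed
  have intg: "integrable N g" if "g \<in> borel_measurable N" "\<And>Z. \<bar>g Z\<bar> \<le> 1" for g :: "_ \<Rightarrow> real"
    by (rule N.integrable_const_bound[where B=1]) (use that in auto)
  have mfst: "fst \<in> measurable N M" "snd \<in> measurable N M" unfolding N_def by auto
  have mT1: "(\<lambda>Z. indicator T (fst Z j) :: real) \<in> borel_measurable N" if "j < n" for j
    using measurable_compose[OF mfst(1) mT[OF that]] .
  have mT2: "(\<lambda>Z. indicator T (snd Z j) :: real) \<in> borel_measurable N" if "j < n" for j
    using measurable_compose[OF mfst(2) mT[OF that]] .
  have mB1: "(\<lambda>Z. indicator B (fst Z) :: real) \<in> borel_measurable N"
    using measurable_compose[OF mfst(1) mB] .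
  have mB2: "(\<lambda>Z. indicator B (snd Z) :: real) \<in> borel_measurable N"
    using measurable_compose[OF mfst(2) mB] .
  have iT1: "integrable N (\<lambda>Z. indicator T (fst Z j) :: real)" if "j < n" for j
    by (rule intg[OF mT1[OF that]]) (simp add: indicator_def)
  have iT2: "integrable N (\<lambda>Z. indicator T (snd Z j) :: real)" if "j < n" for j
    by (rule intg[OF mT2[OF that]]) (simp add: indicator_def)
  have iB1: "integrable N (\<lambda>Z. indicator B (fst Z) :: real)"
    by (rule intg[OF mB1]) (simp add: indicator_def)
  have iB2: "integrable N (\<lambda>Z. indicator B (snd Z) :: real)"
    by (rule intg[OF mB2]) (simp add: indicator_def)
  have iS: "integrable N (\<lambda>Z. (\<Sum>j<n. indicator T (fst Z j) + indicator T (snd Z j)) :: real)"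
    using iT1 iT2 by (intro Bochner_Integration.integrable_sum Bochner_Integration.integrable_add) auto
  have ih: "integrable N h"
    unfolding h_def using iS iB1 iB2 by (intro Bochner_Integration.integrable_add integrable_divide) auto
  have intS: "(\<integral>Z. (\<Sum>j<n. indicator T (fst Z j) + indicator T (snd Z j) :: real) \<partial>N) = (\<Sum>j<n. 2 * measure P T)"
  proof -
    have "(\<integral>Z. (\<Sum>j<n. indicator T (fst Z j) + indicator T (snd Z j) :: real) \<partial>N)
        = (\<Sum>j<n. (\<integral>Z. indicator T (fst Z j) \<partial>N) + (\<integral>Z. indicator T (snd Z j) \<partial>N))"
    proof -
      have "(\<integral>Z. (\<Sum>j<n. indicator T (fst Z j) + indicator T (snd Z j) :: real) \<partial>N)
          = (\<Sum>j<n. (\<integral>Z. (indicator T (fst Z j) + indicator T (snd Z j) :: real) \<partial>N))"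
        by (rule Bochner_Integration.integral_sum) (use iT1 iT2 in auto)
      also have "\<dots> = (\<Sum>j<n. (\<integral>Z. indicator T (fst Z j) \<partial>N) + (\<integral>Z. indicator T (snd Z j) \<partial>N))"
        by (intro sum.cong refl Bochner_Integration.integral_add iT1 iT2) auto
      finally show ?thesis .
    qed
    also have "\<dots> = (\<Sum>j<n. 2 * measure P T)"
    proof (intro sum.cong refl)
      fix j assume "j \<in> {..<n}"
      then have j: "j < n" by simp
      have "(\<integral>Z. indicator T (fst Z j) \<partial>N) = measure P T"
        using fstI[OF mT[OF j]] compI[OF j] by simp
      moreover have "(\<integral>Z. indicator T (snd Z j) \<partial>N) = measure P T"
        using sndI[OF mT[OF j]] fstI[OF mT[OF j]] compI[OF j] by simp
      ultimately show "(\<integral>Z. indicator T (fst Z j) \<partial>N) + (\<integral>Z. indicator T (snd Z j) \<partial>N) = 2 * measure P T"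
        by simp
    qed
    finally show ?thesis .
  qed
  have inth: "(\<integral>Z. h Z \<partial>N) = (\<Sum>j<n. 2 * measure P T) / real (2*n) + 2 * measure M B"
  proof -
    have "(\<integral>Z. h Z \<partial>N) = (\<integral>Z. (\<Sum>j<n. indicator T (fst Z j) + indicator T (snd Z j)) \<partial>N) / real (2*n)
        + (\<integral>Z. indicator B (fst Z) \<partial>N) + (\<integral>Z. indicator B (snd Z) \<partial>N)"
      unfolding h_def using iS iB1 iB2
      by (simp add: Bochner_Integration.integral_add integrable_divide)
    also have "(\<integral>Z. indicator B (snd Z) \<partial>N) = measure M B"
      using sndI[OF mB] fstI[OF mB] sB by simp
    also have "(\<integral>Z. indicator B (fst Z) \<partial>N) = measure M B"
      using fstI[OF mB] sB by simp
    finally show ?thesis using intS by simp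
  qed
  have pw: "DD Z \<le> h Z" if Z: "Z \<in> space N" for Z
  proof -
    obtain X' X'' where XX: "Z = (X', X'')" by (cases Z)
    have sp: "X' \<in> space M" "X'' \<in> space M" using Z XX by (auto simp: N_def space_pair_measure)
    define ys where "ys = map X' [0..<n] @ map X'' [0..<n]"
    define S where "S = (\<Sum>j<n. indicator T (X' j) + indicator T (X'' j) :: real)"
    have S0: "0 \<le> S / real (2*n)" unfolding S_def by (intro divide_nonneg_nonneg sum_nonneg) auto
    have hZ: "h Z = S / real (2*n) + indicator B X' + indicator B X''" by (simp add: h_def XX S_def)
    have DZ: "DD Z = D_M U L t (E X') (E X'') ys" by (simp add: DD_def XX ys_def)
    have iB: "0 \<le> (indicator B X' :: real)" "0 \<le> (indicator B X'' :: real)" by auto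
    show ?thesis
    proof (cases "X' \<in> B \<or> X'' \<in> B")
      case True
      then have "1 \<le> indicator B X' + (indicator B X'' :: real)" by (auto simp: indicator_def)
      moreover have "DD Z \<le> 1" using DZ D_M_le1[OF fin, of U "E X'" "E X''" ys] by simp
      ultimately show ?thesis using hZ S0 by linarith
    next
      case False
      then have g1: "D_bdry U L t (E X') f \<le> ereal \<gamma>" "D_bdry U L t (E X'') f \<le> ereal \<gamma>"
        using sp by (auto simp: B_def E_def not_less)
      have Lv: "E X i x \<in> L i" if "i < t" for X i x
        unfolding E_def using emp_in_L[of c0 i L U C n X x] assms(11,12) that by auto
      have r1: "\<And>i x y. i < t \<Longrightarrow> x \<in> U i - tube (U i) (L i) (f i) \<gamma> \<Longrightarrow> y \<in> U i - tube (U i) (L i) (f i) \<gamma>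
              \<Longrightarrow> f i x = f i y \<longleftrightarrow> E X' i x = E X' i y"
        using good_pair[OF g1(1) assms(15)] fin by blast
      have r2: "\<And>i x y. i < t \<Longrightarrow> x \<in> U i - tube (U i) (L i) (f i) \<gamma> \<Longrightarrow> y \<in> U i - tube (U i) (L i) (f i) \<gamma>
              \<Longrightarrow> f i x = f i y \<longleftrightarrow> E X'' i x = E X'' i y"
        using good_pair[OF g1(2) assms(15)] fin by blast
      obtain \<pi> where \<pi>: "\<pi> \<in> label_perms L t"
          "\<forall>z. z \<notin> T \<longrightarrow> mapper U t (E X') z = \<pi> ` mapper U t (E X'') z"
        using pointwise_perm[OF fin assms(6), of U "E X'" "E X''" f \<gamma>, OF Lv Lv r1 r2] unfolding T_def by blast
      have "DD Z \<le> real (card {j. j < length ys \<and> ys ! j \<in> T}) / real (length ys)"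
        using D_M_tube[OF fin \<pi>(1) \<pi>(2)] DZ by simp
      moreover have "real (card {j. j < length ys \<and> ys ! j \<in> T}) = S"
        using length_filter_conv_card[of "\<lambda>y. y \<in> T" ys, symmetric] lenfilt[of T X' n] lenfilt[of T X'' n]
        by (simp add: ys_def S_def sum.distrib)
      moreover have "length ys = 2 * n" by (simp add: ys_def)
      ultimately have "DD Z \<le> S / real (2*n)" by simp
      then show ?thesis using hZ iB by linarith
    qed
  qed
  have "InStab U L t C c0 n P = (\<integral>Z. DD Z \<partial>N)"
    unfolding InStab_def DD_def E_def N_def M_def by simp
  also have "\<dots> \<le> (\<integral>Z. h Z \<partial>N)"
  proof (rule integral_mono'[OF ih])
    fix Z assume "Z \<in> space N"
    then show "DD Z \<le> h Z" by (rule pw)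
    have "0 \<le> DD Z" unfolding DD_def using D_M_nonneg[OF fin] by (simp add: case_prod_beta)
    then show "0 \<le> h Z" using pw[OF \<open>Z \<in> space N\<close>] by linarith
  qed
  also have "\<dots> \<le> 2 * (measure P T + measure M B + measure M {X \<in> space M. \<exists>i<t. length (sub_sample U i n X) = 0})"
  proof -
    have "(\<Sum>j<n. 2 * measure P T) / real (2*n) \<le> measure P T"
      by (cases "n = 0") auto
    then show ?thesis using inth by (simp add: measure_nonneg)
  qed
  finally show ?thesis unfolding T_def B_def M_def .
qed

end
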